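(* Let $k\ge0$ be an integer and $a,b\in\mathbb{C}$ generic. Put $u=\tfrac34-\tfrac k2-\tfrac a2+\tfrac b2$, $v=\tfrac34-\tfrac k2-\tfrac a2-\tfrac b2$ (assume $(u)_k(v)_k\ne0$), and define the polynomial of degree $2k$ in $n$ $$Q_k^{(3')}(n;a;b)=\frac{1}{(u)_k(v)_k}\sum_{j=0}^{k}\frac{(-\tfrac n2)_j(-\tfrac n2+\tfrac12)_j(-k)_j}{j!}\,(u-n+j)_{k-j}(v-n+j)_{k-j},$$ i.e. $\frac{(u-n)_k(v-n)_k}{(u)_k(v)_k}\,{}_3F_2\!\left[\begin{smallmatrix}-\frac n2,\ -\frac n2+\frac12,\ -k\\ u-n,\ v-n\end{smallmatrix}\big|1\right]$. Then, near $x=0$, $${}_3F_2\!\left[\begin{matrix}\tfrac a3,\ \tfrac13+\tfrac a3,\ \tfrac23+\tfrac a3\\ \tfrac34+\tfrac k2+\tfrac a2+\tfrac b2,\ \tfrac34+\tfrac k2+\tfrac a2-\tfrac b2\end{matrix}\,\Big|\,\frac{27x^2}{(4-x)^3}\right]=\Bigl(1-\tfrac x4\Bigr)^a\sum_{n=0}^\infty\frac{(a)_n(\tfrac14-\tfrac k2+\tfrac a2-\tfrac b2)_n(\tfrac14-\tfrac k2+\tfrac a2+\tfrac b2)_n}{n!\,(\tfrac12+k+a+b)_n(\tfrac12+k+a-b)_n}\,Q_k^{(3')}(n;a;b)\,x^n.$$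
   Context: $(c)_n$ denotes the Pochhammer symbol, $(c)_0=1$; ${}_pF_q$ is the generalized hypergeometric series. Parameters are assumed such that no lower parameter is a nonpositive integer. *)

theory Defs
  imports "HOL-Analysis.Analysis"
begin

definition hyp3F2 :: "complex \<Rightarrow> complex \<Rightarrow> complex \<Rightarrow> complex \<Rightarrow> complex \<Rightarrow> complex \<Rightarrow> complex" where
  "hyp3F2 a1 a2 a3 b1 b2 z =
     (\<Sum>n. pochhammer a1 n * pochhammer a2 n * pochhammer a3 n
           / (pochhammer b1 n * pochhammer b2 n * fact n) * z ^ n)"

definition u3 :: "nat \<Rightarrow> complex \<Rightarrow> complex \<Rightarrow> complex" where
  "u3 k a b = 3/4 - of_nat k / 2 - a/2 + b/2"

definition v3 :: "nat \<Rightarrow> complex \<Rightarrow> complex \<Rightarrow> complex" where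
  "v3 k a b = 3/4 - of_nat k / 2 - a/2 - b/2"

definition Q3' :: "nat \<Rightarrow> nat \<Rightarrow> complex \<Rightarrow> complex \<Rightarrow> complex" where
  "Q3' k n a b =
     (1 / (pochhammer (u3 k a b) k * pochhammer (v3 k a b) k)) *
     (\<Sum>j\<le>k. pochhammer (- of_nat n / 2) j * pochhammer (- of_nat n / 2 + 1/2) j
               * pochhammer (- of_nat k) j / fact j
               * pochhammer (u3 k a b - of_nat n + of_nat j) (k - j)
               * pochhammer (v3 k a b - of_nat n + of_nat j) (k - j))"

definition coef3 :: "nat \<Rightarrow> complex \<Rightarrow> complex \<Rightarrow> nat \<Rightarrow> complex" where
  "coef3 k a b n =
     pochhammer a n * pochhammer (1/4 - of_nat k/2 + a/2 - b/2) n
       * pochhammer (1/4 - of_nat k/2 + a/2 + b/2) n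
     / (fact n * pochhammer (1/2 + of_nat k + a + b) n * pochhammer (1/2 + of_nat k + a - b) n)
     * Q3' k n a b"

end

theory Submission
  imports Defs
begin


definition F3 :: "nat \<Rightarrow> complex \<Rightarrow> complex \<Rightarrow> complex \<Rightarrow> complex \<Rightarrow> complex" where
  "F3 n a b d e = (\<Sum>j\<le>n. pochhammer (- of_nat n) j * pochhammer a j * pochhammer b j
                     / (pochhammer d j * pochhammer e j * fact j))"

lemma poch_shift_fact: "pochhammer (of_nat l + 1 :: complex) i * fact l = fact (l + i)"
proof (induction i)
  case (Suc i)
  have "pochhammer (of_nat l + 1 :: complex) (Suc i) * fact l
      = (pochhammer (of_nat l + 1) i * fact l) * (of_nat l + 1 + of_nat i)"
    by (simp add: pochhammer_Suc)
  also have "\<dots> = fact (l + i) * of_nat (Suc (l + i))" using Suc by simp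
  also have "\<dots> = fact (l + Suc i)" by (simp add: fact_Suc)
  finally show ?case .
qed simp

lemma poch_neg_nat_div_fact:
  "pochhammer (- of_nat (i + l) :: complex) i / fact (i + l) = (-1)^i / fact l"
proof -
  have "pochhammer (- of_nat (i + l) :: complex) i = (-1)^i * pochhammer (of_nat l + 1) i"
    by (subst pochhammer_minus) (simp add: algebra_simps)
  also have "pochhammer (of_nat l + 1 :: complex) i = fact (l + i) / fact l"
    using poch_shift_fact[of l i] by (simp add: field_simps)
  finally show ?thesis by (simp add: add.commute)
qed

lemma vander_ext:
  fixes e c :: complex
  assumes "pochhammer e n \<noteq> 0" "j \<le> n"
  shows "pochhammer (e - c) j / pochhammer e j =
     (\<Sum>i\<le>n. pochhammer c i * pochhammer (- of_nat j) i / (fact i * pochhammer e i))"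
proof -
  have ne: "\<forall>i\<in>{0..<j}. e \<noteq> - of_nat i"
  proof
    fix i assume "i \<in> {0..<j}"
    hence "pochhammer e (Suc i) \<noteq> 0" using assms pochhammer_neq_0_mono[OF assms(1), of "Suc i"] by auto
    thus "e \<noteq> - of_nat i" by (auto simp: pochhammer_eq_0_iff)
  qed
  have "(\<Sum>i\<le>n. pochhammer c i * pochhammer (- of_nat j) i / (fact i * pochhammer e i))
      = (\<Sum>i\<in>{0..j}. pochhammer c i * pochhammer (- of_nat j) i / (fact i * pochhammer e i))"
    by (rule sum.mono_neutral_right) (use assms in \<open>auto simp: pochhammer_of_nat_eq_0_lemma\<close>)
  also have "\<dots> = pochhammer (e - c) j / pochhammer e j"
    using Vandermonde_pochhammer[OF ne, of c] by simp
  finally show ?thesis by simp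
qed

lemma inner_sum:
  fixes a d :: complex
  assumes d: "pochhammer d n \<noteq> 0" and f: "pochhammer (1 + a - d - of_nat n) n \<noteq> 0"
    and i: "i \<le> n"
  shows "(\<Sum>j\<le>n. pochhammer (- of_nat n) j * pochhammer a j * pochhammer (- of_nat j) i
            / (pochhammer d j * fact j))
       = pochhammer (- of_nat n) i * pochhammer a i * pochhammer (d - a) n
            / (pochhammer d n * pochhammer (1 + a - d - of_nat n) i)"
proof -
  define g where "g j = pochhammer (- of_nat n) j * pochhammer a j * pochhammer (- of_nat j) i
            / (pochhammer d j * fact j)" for j
  have "(\<Sum>j\<le>n. g j) = (\<Sum>j\<in>{i..n}. g j)"
    by (rule sum.mono_neutral_right) (auto simp: g_def pochhammer_of_nat_eq_0_lemma)
  also have "\<dots> = (\<Sum>j\<in>{0+i..(n-i)+i}. g j)" using i by simp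
  also have "\<dots> = (\<Sum>l=0..n-i. g (l + i))" by (rule sum.shift_bounds_cl_nat_ivl)
  also have "\<dots> = (\<Sum>l=0..n-i. (-1)^i * pochhammer (- of_nat n) i * pochhammer a i / pochhammer d i *
        (pochhammer (a + of_nat i) l * pochhammer (- of_nat (n - i)) l /
           (of_nat (fact l) * pochhammer (d + of_nat i) l)))"
  proof (rule sum.cong)
    fix l assume l: "l \<in> {0..n-i}"
    have dl: "pochhammer d (i + l) \<noteq> 0" using pochhammer_neq_0_mono[OF d] l i by auto
    have dil: "pochhammer d (i + l) = pochhammer d i * pochhammer (d + of_nat i) l"
      by (rule pochhammer_product')
    have e1: "pochhammer (- of_nat n :: complex) (i + l) = pochhammer (- of_nat n) i * pochhammer (- of_nat (n - i)) l"
      using i by (simp add: pochhammer_product' of_nat_diff)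
    have e2: "pochhammer a (i + l) = pochhammer a i * pochhammer (a + of_nat i) l"
      by (rule pochhammer_product')
    have e3: "pochhammer (- of_nat (i + l) :: complex) i / fact (i + l) = (-1)^i / fact l"
      by (rule poch_neg_nat_div_fact)
    have "g (l + i) = pochhammer (- of_nat n) (i + l) * pochhammer a (i + l) *
        (pochhammer (- of_nat (i + l)) i / fact (i + l)) / pochhammer d (i + l)"
      unfolding g_def by (simp add: add.commute)
    also have "\<dots> = (-1)^i * pochhammer (- of_nat n) i * pochhammer a i / pochhammer d i *
        (pochhammer (a + of_nat i) l * pochhammer (- of_nat (n - i)) l /
           (of_nat (fact l) * pochhammer (d + of_nat i) l))"
      unfolding e3 e1 e2 using dl unfolding dil by (simp add: field_simps)
    finally show "g (l + i) = \<dots>" .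
  qed simp
  also have "\<dots> = (-1)^i * pochhammer (- of_nat n) i * pochhammer a i / pochhammer d i *
        (pochhammer (d + of_nat i - (a + of_nat i)) (n - i) / pochhammer (d + of_nat i) (n - i))"
  proof -
    have ne: "\<forall>k\<in>{0..<n-i}. d + of_nat i \<noteq> - of_nat k"
    proof
      fix k assume k: "k \<in> {0..<n-i}"
      have "pochhammer d (Suc (i + k)) \<noteq> 0" using pochhammer_neq_0_mono[OF d, of "Suc (i+k)"] k by auto
      hence "d \<noteq> - of_nat (i + k)" by (auto simp: pochhammer_eq_0_iff)
      thus "d + of_nat i \<noteq> - of_nat k" by (metis add.assoc add.commute eq_neg_iff_add_eq_0 of_nat_add)
    qed
    show ?thesis by (subst sum_distrib_left[symmetric]) (simp only: Vandermonde_pochhammer[OF ne])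
  qed
  also have "\<dots> = pochhammer (- of_nat n) i * pochhammer a i * pochhammer (d - a) n
            / (pochhammer d n * pochhammer (1 + a - d - of_nat n) i)"
  proof -
    have p1: "pochhammer d n = pochhammer d i * pochhammer (d + of_nat i) (n - i)"
      using pochhammer_product[OF i] .
    have p2: "pochhammer (d - a) n = pochhammer (d - a) (n - i) * pochhammer (d - a + of_nat (n - i)) i"
      using pochhammer_product'[of "d - a" "n - i" i] i by simp
    have p3: "pochhammer (d - a + of_nat (n - i)) i = (-1)^i * pochhammer (1 + a - d - of_nat n) i"
    proof -
      have "pochhammer (d - a + of_nat (n - i)) i = pochhammer (- (a - d - of_nat (n - i))) i" by (simp add: algebra_simps)
      also have "\<dots> = (-1)^i * pochhammer (a - d - of_nat (n - i) - of_nat i + 1) i"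
        by (rule pochhammer_minus)
      also have "a - d - of_nat (n - i) - of_nat i + 1 = 1 + a - d - of_nat n"
        using i by (simp add: of_nat_diff)
      finally show ?thesis .
    qed
    have fi: "pochhammer (1 + a - d - of_nat n) i \<noteq> 0" using pochhammer_neq_0_mono[OF f i] .
    have di: "pochhammer d i \<noteq> 0" using pochhammer_neq_0_mono[OF d i] .
    have dn: "pochhammer (d + of_nat i) (n - i) \<noteq> 0" using d p1 by auto
    have "(-1::complex)^i * (-1)^i = 1" by (simp add: power_mult_distrib[symmetric])
    thus ?thesis unfolding p1 p2 p3 using fi di dn by (simp add: field_simps)
  qed
  finally show ?thesis unfolding g_def .
qed

lemma transfT:
  fixes a b d e :: complex
  assumes d: "pochhammer d n \<noteq> 0" and e: "pochhammer e n \<noteq> 0"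
    and f: "pochhammer (1 + a - d - of_nat n) n \<noteq> 0"
  shows "F3 n a b d e = pochhammer (d - a) n / pochhammer d n * F3 n a (e - b) e (1 + a - d - of_nat n)"
proof -
  have "F3 n a b d e = (\<Sum>j\<le>n. pochhammer (- of_nat n) j * pochhammer a j / (pochhammer d j * fact j)
        * (pochhammer b j / pochhammer e j))"
    unfolding F3_def by (intro sum.cong refl) (simp add: divide_simps mult_ac)
  also have "\<dots> = (\<Sum>j\<le>n. pochhammer (- of_nat n) j * pochhammer a j / (pochhammer d j * fact j)
        * (\<Sum>i\<le>n. pochhammer (e - b) i * pochhammer (- of_nat j) i / (fact i * pochhammer e i)))"
  proof (rule sum.cong)
    fix j assume "j \<in> {..n}"
    thus "pochhammer (- of_nat n) j * pochhammer a j / (pochhammer d j * fact j) * (pochhammer b j / pochhammer e j)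
      = pochhammer (- of_nat n) j * pochhammer a j / (pochhammer d j * fact j)
        * (\<Sum>i\<le>n. pochhammer (e - b) i * pochhammer (- of_nat j) i / (fact i * pochhammer e i))"
      using vander_ext[OF e, of j "e - b"] by simp
  qed simp
  also have "\<dots> = (\<Sum>i\<le>n. pochhammer (e - b) i / (fact i * pochhammer e i) *
        (\<Sum>j\<le>n. pochhammer (- of_nat n) j * pochhammer a j * pochhammer (- of_nat j) i
            / (pochhammer d j * fact j)))"
  proof -
    have "(\<Sum>j\<le>n. pochhammer (- of_nat n) j * pochhammer a j / (pochhammer d j * fact j)
        * (\<Sum>i\<le>n. pochhammer (e - b) i * pochhammer (- of_nat j) i / (fact i * pochhammer e i)))
       = (\<Sum>j\<le>n. \<Sum>i\<le>n. pochhammer (e - b) i / (fact i * pochhammer e i) *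
        (pochhammer (- of_nat n) j * pochhammer a j * pochhammer (- of_nat j) i
            / (pochhammer d j * fact j)))"
      unfolding sum_distrib_left by (intro sum.cong refl) (simp add: divide_simps mult_ac)
    also have "\<dots> = (\<Sum>i\<le>n. \<Sum>j\<le>n. pochhammer (e - b) i / (fact i * pochhammer e i) *
        (pochhammer (- of_nat n) j * pochhammer a j * pochhammer (- of_nat j) i
            / (pochhammer d j * fact j)))"
      by (rule sum.swap)
    finally show ?thesis by (simp only: sum_distrib_left)
  qed
  also have "\<dots> = (\<Sum>i\<le>n. pochhammer (e - b) i / (fact i * pochhammer e i) *
        (pochhammer (- of_nat n) i * pochhammer a i * pochhammer (d - a) n
            / (pochhammer d n * pochhammer (1 + a - d - of_nat n) i)))"
    by (rule sum.cong) (simp_all add: inner_sum[OF d f])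
  also have "\<dots> = pochhammer (d - a) n / pochhammer d n * F3 n a (e - b) e (1 + a - d - of_nat n)"
    unfolding F3_def sum_distrib_left by (intro sum.cong refl) (simp add: divide_simps mult_ac)
  finally show ?thesis .
qed

lemma sheppard:
  fixes a b d e :: complex
  assumes d: "pochhammer d n \<noteq> 0" and e: "pochhammer e n \<noteq> 0"
    and f: "pochhammer (1 + a - d - of_nat n) n \<noteq> 0"
    and g: "pochhammer (1 + a - e - of_nat n) n \<noteq> 0"
  shows "F3 n a b d e = pochhammer (d - a) n * pochhammer (e - a) n / (pochhammer d n * pochhammer e n)
      * F3 n a (1 + a + b - d - e - of_nat n) (1 + a - d - of_nat n) (1 + a - e - of_nat n)"
proof -
  have "F3 n a b d e = pochhammer (d - a) n / pochhammer d n * F3 n a (e - b) e (1 + a - d - of_nat n)"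
    by (rule transfT[OF d e f])
  also have "F3 n a (e - b) e (1 + a - d - of_nat n) = pochhammer (e - a) n / pochhammer e n *
      F3 n a ((1 + a - d - of_nat n) - (e - b)) (1 + a - d - of_nat n) (1 + a - e - of_nat n)"
    by (rule transfT[OF e f g])
  also have "(1 + a - d - of_nat n) - (e - b) = 1 + a + b - d - e - of_nat n" by simp
  finally show ?thesis by simp
qed

lemma poch_triple:
  fixes a :: complex
  shows "27^m * pochhammer (a/3) m * pochhammer (1/3 + a/3) m * pochhammer (2/3 + a/3) m = pochhammer a (3*m)"
proof (induction m)
  case (Suc m)
  have "pochhammer a (3 * Suc m) = pochhammer a (3*m) * pochhammer (a + of_nat (3*m)) 3"
    using pochhammer_product'[of a "3*m" 3] by (simp add: add.commute)
  also have "pochhammer (a + of_nat (3*m)) 3 = (a + of_nat (3*m)) * (a + of_nat (3*m) + 1) * (a + of_nat (3*m) + 2)"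
    by (simp add: numeral_3_eq_3 pochhammer_Suc algebra_simps)
  also note Suc[symmetric]
  finally show ?case by (simp add: pochhammer_Suc field_simps)
qed simp

lemma poch_negnat:
  assumes "i \<le> N"
  shows "pochhammer (- of_nat N :: complex) i = (-1)^i * fact N / fact (N - i)"
proof -
  have "pochhammer (- of_nat (i + (N - i)) :: complex) i / fact (i + (N - i)) = (-1)^i / fact (N - i)"
    by (rule poch_neg_nat_div_fact)
  with assms show ?thesis by (simp add: field_simps)
qed

lemma poch_half_pair:
  "pochhammer (- of_nat N / 2 :: complex) m * pochhammer (- of_nat N / 2 + 1/2) m
   = pochhammer (- of_nat (N div 2)) m * pochhammer (1/2 - of_nat N + of_nat (N div 2)) m"
proof (cases "even N")
  case True
  then obtain n where N: "N = 2*n" by blast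
  show ?thesis unfolding N by (simp add: field_simps)
next
  case False
  then obtain n where N: "N = 2*n+1" using oddE by blast
  have "N div 2 = n" using N by simp
  show ?thesis unfolding N \<open>N div 2 = n\<close> by (simp add: field_simps mult.commute)
qed

lemma fact_ratio_double:
  assumes "2*m \<le> N"
  shows "fact N / fact (N - 2*m) = (4::complex)^m * pochhammer (- of_nat (N div 2)) m
           * pochhammer (1/2 - of_nat N + of_nat (N div 2)) m"
proof -
  have "pochhammer (- of_nat N :: complex) (2*m) = (-1)^(2*m) * fact N / fact (N - 2*m)"
    by (rule poch_negnat[OF assms])
  hence "fact N / fact (N - 2*m) = pochhammer (2 * (- of_nat N / 2) :: complex) (2*m)" by simp
  also have "\<dots> = of_nat (2^(2*m)) * pochhammer (- of_nat N / 2) m * pochhammer (- of_nat N / 2 + 1/2) m"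
    by (rule pochhammer_double)
  also have "of_nat (2^(2*m)) = (4::complex)^m" by (simp add: power_mult)
  finally show ?thesis using poch_half_pair[of N m] by (simp add: mult.assoc)
qed


lemma H1:
  fixes x :: complex
  shows "pochhammer (x - of_nat k) N * pochhammer (1 - x - of_nat N) k = pochhammer x N * pochhammer (1 - x) k"
proof -
  have m1: "pochhammer (1 - x - of_nat N) k = (-1)^k * pochhammer (x - of_nat k + of_nat N) k"
  proof -
    have "pochhammer (1 - x - of_nat N) k = pochhammer (- (x + of_nat N - 1)) k" by (simp add: algebra_simps)
    also have "\<dots> = (-1)^k * pochhammer (x + of_nat N - 1 - of_nat k + 1) k" by (rule pochhammer_minus)
    finally show ?thesis by (simp add: algebra_simps)
  qed
  have m2: "pochhammer (1 - x) k = (-1)^k * pochhammer (x - of_nat k) k"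
  proof -
    have "pochhammer (1 - x) k = pochhammer (- (x - 1)) k" by (simp add: algebra_simps)
    also have "\<dots> = (-1)^k * pochhammer (x - 1 - of_nat k + 1) k" by (rule pochhammer_minus)
    finally show ?thesis by (simp add: algebra_simps)
  qed
  have "pochhammer (x - of_nat k) N * pochhammer (x - of_nat k + of_nat N) k = pochhammer (x - of_nat k) (N + k)"
    by (rule pochhammer_product'[symmetric])
  also have "\<dots> = pochhammer (x - of_nat k) (k + N)" by (simp add: add.commute)
  also have "\<dots> = pochhammer (x - of_nat k) k * pochhammer x N"
    by (simp add: pochhammer_product')
  finally show ?thesis unfolding m1 m2 by (simp add: mult_ac)
qed

lemma H2:
  fixes x :: complex
  shows "2^N * pochhammer x N * pochhammer (x + 1/2) (N div 2)
       = pochhammer (2*x) N * pochhammer (x + of_nat N - of_nat (N div 2)) (N div 2)"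
proof (cases "even N")
  case True
  then obtain n where N: "N = 2*n" by blast
  have d: "pochhammer (2*x) (2*n) = of_nat (2^(2*n)) * pochhammer x n * pochhammer (x+1/2) n"
    by (rule pochhammer_double)
  have p: "pochhammer x (n + n) = pochhammer x n * pochhammer (x + of_nat n) n" by (rule pochhammer_product')
  have nd: "2*n div 2 = n" by simp
  have p2: "pochhammer x (2*n) = pochhammer x (n + n)" by (simp add: mult_2)
  have e: "x + of_nat (2*n) - of_nat n = x + of_nat n" by simp
  have c: "(2::complex)^(2*n) = of_nat (2^(2*n))" by simp
  show ?thesis unfolding N nd p2 p e d c by (simp only: mult_ac)
next
  case False
  then obtain n where N: "N = 2*n+1" using oddE by blast
  have nd: "(2*n+1) div 2 = n" by simp
  have d: "pochhammer (2*x) (2*n) = of_nat (2^(2*n)) * pochhammer x n * pochhammer (x+1/2) n"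
    by (rule pochhammer_double)
  have d2: "pochhammer (2*x) (2*n+1) = pochhammer (2*x) (2*n) * (2*x + of_nat (2*n))"
    by (simp add: pochhammer_Suc)
  have p: "pochhammer x (Suc n + n) = pochhammer x (Suc n) * pochhammer (x + of_nat (Suc n)) n" by (rule pochhammer_product')
  have p2: "pochhammer x (2*n+1) = pochhammer x (Suc n + n)" by (simp add: mult_2)
  have e: "x + of_nat (2*n+1) - of_nat n = x + of_nat (Suc n)" by simp
  have c: "(2::complex)^(2*n+1) = of_nat (2^(2*n)) * 2" by simp
  have q: "pochhammer x (Suc n) = pochhammer x n * (x + of_nat n)" by (rule pochhammer_Suc)
  have r: "2 * x + of_nat (2*n) = 2 * (x + of_nat n)" by simp
  show ?thesis unfolding N nd p2 p d2 d e c q r by (simp only: mult_ac)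
qed

definition c3 :: "nat \<Rightarrow> complex \<Rightarrow> complex \<Rightarrow> nat \<Rightarrow> complex" where
  "c3 k a b m = pochhammer (a/3) m * pochhammer (1/3 + a/3) m * pochhammer (2/3 + a/3) m
     / (pochhammer (3/4 + of_nat k/2 + a/2 + b/2) m * pochhammer (3/4 + of_nat k/2 + a/2 - b/2) m * fact m)"

definition LF :: "nat \<Rightarrow> complex \<Rightarrow> complex \<Rightarrow> nat \<Rightarrow> complex" where
  "LF k a b N = (\<Sum>m\<le>N div 2. c3 k a b m * (27/64)^m * pochhammer (of_nat (3*m) + a) (N - 2*m)
        / (fact (N - 2*m) * 4^(N - 2*m)))"

lemma LF_term:
  fixes a B0 B1 :: complex
  assumes m: "m \<le> N div 2" and D: "pochhammer B0 m * pochhammer B1 m \<noteq> 0"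
  shows "pochhammer (a/3) m * pochhammer (1/3 + a/3) m * pochhammer (2/3 + a/3) m
     / (pochhammer B0 m * pochhammer B1 m * fact m) * (27/64)^m * pochhammer (of_nat (3*m) + a) (N - 2*m)
        / (fact (N - 2*m) * 4^(N - 2*m))
    = pochhammer a N / (fact N * 4^N) * (pochhammer (- of_nat (N div 2)) m
        * pochhammer (1/2 - of_nat N + of_nat (N div 2)) m * pochhammer (a + of_nat N) m
        / (pochhammer B0 m * pochhammer B1 m * fact m))"
proof -
  define P where "P = pochhammer (a/3) m * pochhammer (1/3 + a/3) m * pochhammer (2/3 + a/3) m"
  define X where "X = pochhammer (- of_nat (N div 2)) m * pochhammer (1/2 - of_nat N + of_nat (N div 2) :: complex) m"
  have m2: "2*m \<le> N" using m by linarith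
  have P: "P = pochhammer a (3*m) / 27^m" using poch_triple[of m a] unfolding P_def by (simp add: field_simps)
  have pp: "pochhammer a (3*m) * pochhammer (of_nat (3*m) + a) (N - 2*m) = pochhammer a N * pochhammer (a + of_nat N) m"
  proof -
    have "pochhammer a (3*m) * pochhammer (of_nat (3*m) + a) (N - 2*m) = pochhammer a (3*m + (N - 2*m))"
      by (simp add: pochhammer_product' add.commute)
    also have "3*m + (N - 2*m) = N + m" using m2 by simp
    also have "pochhammer a (N + m) = pochhammer a N * pochhammer (a + of_nat N) m" by (rule pochhammer_product')
    finally show ?thesis .
  qed
  have F1: "fact N / fact (N - 2*m) = (4::complex)^m * X"
    using fact_ratio_double[OF m2] unfolding X_def by (simp add: mult.assoc)
  have F0: "fact N = (4::complex)^m * X * fact (N - 2*m)"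
    using F1 by (simp add: field_simps)
  hence Xnz: "X \<noteq> 0" by auto
  hence F: "1 / fact (N - 2*m) = (4::complex)^m * X / fact N"
    using F0 by (simp add: field_simps)
  have pw: "(4::complex)^(N - 2*m) * 4^(2*m) = 4^N" using m2 by (simp add: power_add[symmetric])
  have pw2: "(64::complex)^m = 4^(2*m) * 4^m"
  proof -
    have "(4::complex)^(2*m) * 4^m = 4^(2*m + m)" by (simp only: power_add)
    also have "2*m + m = 3*m" by simp
    also have "(4::complex)^(3*m) = (4^3)^m" by (rule power_mult)
    also have "(4::complex)^3 = 64" by simp
    finally show ?thesis by simp
  qed
  show ?thesis
    unfolding P_def[symmetric] X_def[symmetric] P
    using pp F pw pw2 D Xnz by (simp add: field_simps)
qed

lemma LF_F3:
  assumes h0: "pochhammer (3/4 + of_nat k/2 + a/2 + b/2) (N div 2) \<noteq> 0"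
    and h1: "pochhammer (3/4 + of_nat k/2 + a/2 - b/2) (N div 2) \<noteq> 0"
  shows "LF k a b N = pochhammer a N / (fact N * 4^N) *
     F3 (N div 2) (1/2 - of_nat N + of_nat (N div 2)) (a + of_nat N)
        (3/4 + of_nat k/2 + a/2 + b/2) (3/4 + of_nat k/2 + a/2 - b/2)"
  unfolding LF_def F3_def sum_distrib_left
proof (rule sum.cong)
  fix m assume m: "m \<in> {..N div 2}"
  have D: "pochhammer (3/4 + of_nat k/2 + a/2 + b/2) m * pochhammer (3/4 + of_nat k/2 + a/2 - b/2) m \<noteq> 0"
    using pochhammer_neq_0_mono[OF h0, of m] pochhammer_neq_0_mono[OF h1, of m] m by auto
  show "c3 k a b m * (27 / 64) ^ m * pochhammer (of_nat (3 * m) + a) (N - 2 * m) / (fact (N - 2 * m) * 4 ^ (N - 2 * m)) = 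
    pochhammer a N / (fact N * 4 ^ N) * (pochhammer (- of_nat (N div 2)) m * pochhammer (1 / 2 - of_nat N + of_nat (N div 2)) m *
         pochhammer (a + of_nat N) m / (pochhammer (3 / 4 + of_nat k / 2 + a / 2 + b / 2) m *
          pochhammer (3 / 4 + of_nat k / 2 + a / 2 - b / 2) m * fact m))"
    unfolding c3_def using LF_term[OF _ D, of N a] m by simp
qed simp

lemma F3_ext:
  assumes "n \<le> M"
  shows "F3 n A C d e = (\<Sum>j\<le>M. pochhammer (- of_nat n) j * pochhammer A j * pochhammer C j
                     / (pochhammer d j * pochhammer e j * fact j))"
  unfolding F3_def
  by (rule sum.mono_neutral_left) (use assms in \<open>auto simp: pochhammer_of_nat_eq_0_lemma\<close>)

lemma Q_F3:
  fixes a b :: complex and k N :: nat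
  defines "U \<equiv> u3 k a b - of_nat N" and "V \<equiv> v3 k a b - of_nat N"
  assumes hU: "pochhammer U (N div 2 + k) \<noteq> 0" and hV: "pochhammer V (N div 2 + k) \<noteq> 0"
    and uv: "pochhammer (u3 k a b) k * pochhammer (v3 k a b) k \<noteq> 0"
  shows "Q3' k N a b * (pochhammer (u3 k a b) k * pochhammer (v3 k a b) k)
       = pochhammer U k * pochhammer V k * F3 (N div 2) (1/2 - of_nat N + of_nat (N div 2)) (- of_nat k) V U"
proof -
  define n where "n = N div 2"
  define A :: complex where "A = 1/2 - of_nat N + of_nat (N div 2)"
  have "Q3' k N a b * (pochhammer (u3 k a b) k * pochhammer (v3 k a b) k)
     = (\<Sum>j\<le>k. pochhammer (- of_nat N / 2) j * pochhammer (- of_nat N / 2 + 1/2) j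
               * pochhammer (- of_nat k) j / fact j
               * pochhammer (U + of_nat j) (k - j)
               * pochhammer (V + of_nat j) (k - j))"
    unfolding Q3'_def U_def V_def using uv by simp
  also have "\<dots> = (\<Sum>j\<le>n + k. pochhammer (- of_nat N / 2) j * pochhammer (- of_nat N / 2 + 1/2) j
               * pochhammer (- of_nat k) j / fact j
               * pochhammer (U + of_nat j) (k - j)
               * pochhammer (V + of_nat j) (k - j))"
    by (rule sum.mono_neutral_left) (auto simp: pochhammer_of_nat_eq_0_lemma)
  also have "\<dots> = (\<Sum>j\<le>n + k. pochhammer U k * pochhammer V k * (pochhammer (- of_nat n) j * pochhammer A j *
        pochhammer (- of_nat k) j / (pochhammer V j * pochhammer U j * fact j)))"
  proof (rule sum.cong)
    fix j assume j: "j \<in> {..n + k}"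
    show "pochhammer (- of_nat N / 2) j * pochhammer (- of_nat N / 2 + 1/2) j
               * pochhammer (- of_nat k) j / fact j
               * pochhammer (U + of_nat j) (k - j)
               * pochhammer (V + of_nat j) (k - j)
        = pochhammer U k * pochhammer V k * (pochhammer (- of_nat n) j * pochhammer A j *
        pochhammer (- of_nat k) j / (pochhammer V j * pochhammer U j * fact j))"
    proof (cases "j \<le> k")
      case True
      have Uj: "pochhammer U j \<noteq> 0" using pochhammer_neq_0_mono[OF hU, of j] True by auto
      have Vj: "pochhammer V j \<noteq> 0" using pochhammer_neq_0_mono[OF hV, of j] True by auto
      have pU: "pochhammer U k = pochhammer U j * pochhammer (U + of_nat j) (k - j)"
        using pochhammer_product[OF True] .
      have pV: "pochhammer V k = pochhammer V j * pochhammer (V + of_nat j) (k - j)"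
        using pochhammer_product[OF True] .
      have hp: "pochhammer (- of_nat N / 2) j * pochhammer (- of_nat N / 2 + 1/2) j
           = pochhammer (- of_nat n) j * pochhammer A j"
        unfolding n_def A_def by (rule poch_half_pair)
      show ?thesis unfolding pU pV using Uj Vj hp by (simp add: field_simps)
    next
      case False
      thus ?thesis by (simp add: pochhammer_of_nat_eq_0_lemma)
    qed
  qed simp
  also have "\<dots> = pochhammer U k * pochhammer V k * F3 n A (- of_nat k) V U"
    by (subst F3_ext[of n "n + k"]) (simp_all add: sum_distrib_left)
  finally show ?thesis unfolding n_def A_def .
qed

lemma FI_gen:
  fixes a b :: complex and k N :: nat
  assumes h0: "pochhammer (3/4 + of_nat k/2 + a/2 + b/2) (N div 2) \<noteq> 0"
    and h1: "pochhammer (3/4 + of_nat k/2 + a/2 - b/2) (N div 2) \<noteq> 0"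
    and hg: "pochhammer (1/2 + of_nat k + a + b) N \<noteq> 0"
    and hd: "pochhammer (1/2 + of_nat k + a - b) N \<noteq> 0"
    and uv: "pochhammer (u3 k a b) k * pochhammer (v3 k a b) k \<noteq> 0"
    and hU: "pochhammer (u3 k a b - of_nat N) (N div 2 + k) \<noteq> 0"
    and hV: "pochhammer (v3 k a b - of_nat N) (N div 2 + k) \<noteq> 0"
  shows "LF k a b N = coef3 k a b N"
proof -
  define B0 where "B0 = 3/4 + of_nat k/2 + a/2 + b/2"
  define B1 where "B1 = 3/4 + of_nat k/2 + a/2 - b/2"
  define n where "n = N div 2"
  define A :: complex where "A = 1/2 - of_nat N + of_nat n"
  define U where "U = u3 k a b - of_nat N"
  define V where "V = v3 k a b - of_nat N"
  define uk where "uk = pochhammer (u3 k a b) k"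
  define vk where "vk = pochhammer (v3 k a b) k"
  define F where "F = F3 n A (- of_nat k) V U"
  define Q where "Q = Q3' k N a b"
  have eV: "1 + A - B0 - of_nat n = V" unfolding A_def B0_def V_def v3_def by (simp add: field_simps)
  have eU: "1 + A - B1 - of_nat n = U" unfolding A_def B1_def U_def u3_def by (simp add: field_simps)
  have eK: "1 + A + (a + of_nat N) - B0 - B1 - of_nat n = - of_nat k"
    unfolding A_def B0_def B1_def by (simp add: field_simps)
  have B0n: "pochhammer B0 n \<noteq> 0" using h0 unfolding B0_def n_def .
  have B1n: "pochhammer B1 n \<noteq> 0" using h1 unfolding B1_def n_def .
  have Vn: "pochhammer V n \<noteq> 0" using pochhammer_neq_0_mono[OF hV, of n] unfolding V_def n_def by simp
  have Un: "pochhammer U n \<noteq> 0" using pochhammer_neq_0_mono[OF hU, of n] unfolding U_def n_def by simp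
  have Vk: "pochhammer V k \<noteq> 0" using pochhammer_neq_0_mono[OF hV, of k] unfolding V_def n_def by simp
  have Uk: "pochhammer U k \<noteq> 0" using pochhammer_neq_0_mono[OF hU, of k] unfolding U_def n_def by simp
  have L1: "LF k a b N = pochhammer a N / (fact N * 4^N) * F3 n A (a + of_nat N) B0 B1"
    using LF_F3[OF h0 h1] unfolding B0_def B1_def A_def n_def .
  have Sh: "F3 n A (a + of_nat N) B0 B1 = pochhammer (B0 - A) n * pochhammer (B1 - A) n
       / (pochhammer B0 n * pochhammer B1 n) * F"
    using sheppard[of B0 n B1 A "a + of_nat N"] B0n B1n Vn Un unfolding eV eU eK F_def by simp
  have Qe: "Q * (uk * vk) = pochhammer U k * pochhammer V k * F"
    using Q_F3[OF hU hV uv] unfolding Q_def uk_def vk_def F_def U_def V_def n_def A_def .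
  define x where "x = B0 - 1/2"
  define y where "y = B1 - 1/2"
  have E0a: "pochhammer (1/4 - of_nat k/2 + a/2 + b/2) N * pochhammer V k = pochhammer x N * vk"
  proof -
    have "pochhammer (x - of_nat k) N * pochhammer (1 - x - of_nat N) k = pochhammer x N * pochhammer (1 - x) k"
      by (rule H1)
    moreover have "x - of_nat k = 1/4 - of_nat k/2 + a/2 + b/2" unfolding x_def B0_def by (simp add: field_simps)
    moreover have "1 - x - of_nat N = V" unfolding x_def B0_def V_def v3_def by (simp add: field_simps)
    moreover have "1 - x = v3 k a b" unfolding x_def B0_def v3_def by (simp add: field_simps)
    ultimately show ?thesis unfolding vk_def by simp
  qed
  have E1a: "pochhammer (1/4 - of_nat k/2 + a/2 - b/2) N * pochhammer U k = pochhammer y N * uk"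
  proof -
    have "pochhammer (y - of_nat k) N * pochhammer (1 - y - of_nat N) k = pochhammer y N * pochhammer (1 - y) k"
      by (rule H1)
    moreover have "y - of_nat k = 1/4 - of_nat k/2 + a/2 - b/2" unfolding y_def B1_def by (simp add: field_simps)
    moreover have "1 - y - of_nat N = U" unfolding y_def B1_def U_def u3_def by (simp add: field_simps)
    moreover have "1 - y = u3 k a b" unfolding y_def B1_def u3_def by (simp add: field_simps)
    ultimately show ?thesis unfolding uk_def by simp
  qed
  have E0b: "2^N * pochhammer x N * pochhammer B0 n = pochhammer (1/2 + of_nat k + a + b) N * pochhammer (B0 - A) n"
  proof -
    have "2^N * pochhammer x N * pochhammer (x + 1/2) (N div 2)
       = pochhammer (2*x) N * pochhammer (x + of_nat N - of_nat (N div 2)) (N div 2)" by (rule H2)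
    moreover have "x + 1/2 = B0" unfolding x_def by simp
    moreover have "2*x = 1/2 + of_nat k + a + b" unfolding x_def B0_def by (simp add: field_simps)
    moreover have "x + of_nat N - of_nat (N div 2) = B0 - A" unfolding x_def A_def n_def by (simp add: field_simps)
    ultimately show ?thesis unfolding n_def by simp
  qed
  have E1b: "2^N * pochhammer y N * pochhammer B1 n = pochhammer (1/2 + of_nat k + a - b) N * pochhammer (B1 - A) n"
  proof -
    have "2^N * pochhammer y N * pochhammer (y + 1/2) (N div 2)
       = pochhammer (2*y) N * pochhammer (y + of_nat N - of_nat (N div 2)) (N div 2)" by (rule H2)
    moreover have "y + 1/2 = B1" unfolding y_def by simp
    moreover have "2*y = 1/2 + of_nat k + a - b" unfolding y_def B1_def by (simp add: field_simps)
    moreover have "y + of_nat N - of_nat (N div 2) = B1 - A" unfolding y_def A_def n_def by (simp add: field_simps)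
    ultimately show ?thesis unfolding n_def by simp
  qed
  define al where "al = pochhammer (1/4 - of_nat k/2 + a/2 - b/2) N"
  define be where "be = pochhammer (1/4 - of_nat k/2 + a/2 + b/2) N"
  define ga where "ga = pochhammer (1/2 + of_nat k + a + b) N"
  define de where "de = pochhammer (1/2 + of_nat k + a - b) N"
  have key: "4^N * al * be * pochhammer U k * pochhammer V k * pochhammer B0 n * pochhammer B1 n
      = pochhammer (B0 - A) n * pochhammer (B1 - A) n * uk * vk * ga * de"
  proof -
    have "4^N * al * be * pochhammer U k * pochhammer V k * pochhammer B0 n * pochhammer B1 n
        = (2^N * (be * pochhammer V k) * pochhammer B0 n) * (2^N * (al * pochhammer U k) * pochhammer B1 n)"
      by (simp add: power_mult_distrib[symmetric] mult_ac)
    also have "\<dots> = (vk * (2^N * pochhammer x N * pochhammer B0 n)) * (uk * (2^N * pochhammer y N * pochhammer B1 n))"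
      unfolding al_def be_def E0a E1a by (simp add: mult_ac)
    also have "\<dots> = pochhammer (B0 - A) n * pochhammer (B1 - A) n * uk * vk * ga * de"
      unfolding E0b E1b ga_def de_def by (simp add: mult_ac)
    finally show ?thesis .
  qed
  have ga0: "ga \<noteq> 0" using hg unfolding ga_def .
  have de0: "de \<noteq> 0" using hd unfolding de_def .
  have uvk: "uk * vk \<noteq> 0" using uv unfolding uk_def vk_def .
  have Fe: "F = Q * (uk * vk) / (pochhammer U k * pochhammer V k)" using Qe Uk Vk by (simp add: field_simps)
  have "LF k a b N = pochhammer a N / (fact N * 4^N) * (pochhammer (B0 - A) n * pochhammer (B1 - A) n
       / (pochhammer B0 n * pochhammer B1 n)) * (Q * (uk * vk) / (pochhammer U k * pochhammer V k))"
    unfolding L1 Sh Fe by (simp add: mult.assoc)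
  also have "\<dots> = pochhammer a N * al * be / (fact N * ga * de) * Q"
    using key B0n B1n Uk Vk ga0 de0 by (simp add: field_simps)
  also have "\<dots> = coef3 k a b N" unfolding coef3_def al_def be_def ga_def de_def Q_def by simp
  finally show ?thesis .
qed



lemma ev_not_in_finite:
  assumes "finite Z"
  shows "eventually (\<lambda>x. x \<notin> Z) (at (b0::complex))"
  unfolding eventually_at_topological
proof (intro exI conjI)
  show "open (- (Z - {b0}))" using assms by (intro open_Compl finite_imp_closed) auto
qed auto

lemma ev_poch_affine:
  fixes c s b0 :: complex
  assumes "s \<noteq> 0"
  shows "eventually (\<lambda>b. pochhammer (c + s*b) M \<noteq> 0) (at b0)"
proof -
  define Z where "Z = (\<lambda>i. (- of_nat i - c) / s) ` {..<M}"
  have fin: "finite Z" unfolding Z_def by simp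
  have nz: "pochhammer (c + s*b) M \<noteq> 0" if "b \<notin> Z" for b
  proof
    assume "pochhammer (c + s*b) M = 0"
    then obtain i where i: "i < M" "c + s*b = - of_nat i" by (auto simp: pochhammer_eq_0_iff)
    hence "b = (- of_nat i - c) / s" using assms by (simp add: field_simps)
    hence "b \<in> Z" unfolding Z_def using i by auto
    with that show False by simp
  qed
  show ?thesis by (rule eventually_mono[OF ev_not_in_finite[OF fin]]) (rule nz)
qed

lemma ev_nz_cont:
  fixes g :: "complex \<Rightarrow> complex"
  assumes "isCont g b0" "g b0 \<noteq> 0"
  shows "eventually (\<lambda>b. g b \<noteq> 0) (at b0)"
proof -
  have "(g \<longlongrightarrow> g b0) (at b0)" using assms(1) by (simp add: isCont_def)
  from topological_tendstoD[OF this, of "- {0}"] assms(2) show ?thesis by auto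
qed

lemma cont_eq:
  fixes f g :: "complex \<Rightarrow> complex"
  assumes "isCont f b0" "isCont g b0" "eventually (\<lambda>b. f b = g b) (at b0)"
  shows "f b0 = g b0"
proof -
  have "(f \<longlongrightarrow> f b0) (at b0)" using assms(1) by (simp add: isCont_def)
  hence "(g \<longlongrightarrow> f b0) (at b0)" using tendsto_cong[OF assms(3)] by simp
  moreover have "(g \<longlongrightarrow> g b0) (at b0)" using assms(2) by (simp add: isCont_def)
  ultimately show ?thesis using tendsto_unique[OF at_neq_bot] by blast
qed

lemma poch_nz_all:
  fixes z :: complex
  assumes "\<forall>m::nat. z \<noteq> - of_nat m"
  shows "pochhammer z n \<noteq> 0"
  using assms by (auto simp: pochhammer_eq_0_iff)

lemma isCont_poch_comp [continuous_intros]: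
  fixes f :: "complex \<Rightarrow> complex"
  shows "isCont f z \<Longrightarrow> isCont (\<lambda>x. pochhammer (f x) n) z"
  by (rule isCont_o2[OF _ isCont_pochhammer])

lemma isCont_LF:
  fixes a b :: complex
  assumes l1: "\<forall>m::nat. 3/4 + of_nat k/2 + a/2 + b/2 \<noteq> - of_nat m"
    and l2: "\<forall>m::nat. 3/4 + of_nat k/2 + a/2 - b/2 \<noteq> - of_nat m"
  shows "isCont (\<lambda>w. LF k a w N) b"
  unfolding LF_def c3_def
  using poch_nz_all[OF l1] poch_nz_all[OF l2]
  by (intro continuous_intros) auto

lemma isCont_coef3:
  fixes a b :: complex
  assumes uv: "pochhammer (u3 k a b) k * pochhammer (v3 k a b) k \<noteq> 0"
    and l3: "\<forall>m::nat. 1/2 + of_nat k + a + b \<noteq> - of_nat m"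
    and l4: "\<forall>m::nat. 1/2 + of_nat k + a - b \<noteq> - of_nat m"
  shows "isCont (\<lambda>w. coef3 k a w N) b"
  unfolding coef3_def Q3'_def
  using poch_nz_all[OF l3] poch_nz_all[OF l4] uv
  by (intro continuous_intros) (auto simp: u3_def v3_def)

lemma FI_all:
  fixes k :: nat and a b :: complex
  assumes uv: "pochhammer (u3 k a b) k * pochhammer (v3 k a b) k \<noteq> 0"
    and l1: "\<forall>m::nat. 3/4 + of_nat k/2 + a/2 + b/2 \<noteq> - of_nat m"
    and l2: "\<forall>m::nat. 3/4 + of_nat k/2 + a/2 - b/2 \<noteq> - of_nat m"
    and l3: "\<forall>m::nat. 1/2 + of_nat k + a + b \<noteq> - of_nat m"
    and l4: "\<forall>m::nat. 1/2 + of_nat k + a - b \<noteq> - of_nat m"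
  shows "LF k a b N = coef3 k a b N"
proof (rule cont_eq[where f = "\<lambda>w. LF k a w N" and g = "\<lambda>w. coef3 k a w N"])
  show "isCont (\<lambda>w. LF k a w N) b" by (rule isCont_LF[OF l1 l2])
  show "isCont (\<lambda>w. coef3 k a w N) b" by (rule isCont_coef3[OF uv l3 l4])
  have e0: "eventually (\<lambda>w. pochhammer (3/4 + of_nat k/2 + a/2 + w/2) (N div 2) \<noteq> 0) (at b)"
    by (rule ev_nz_cont) (use poch_nz_all[OF l1] in \<open>auto intro!: continuous_intros\<close>)
  have e1: "eventually (\<lambda>w. pochhammer (3/4 + of_nat k/2 + a/2 - w/2) (N div 2) \<noteq> 0) (at b)"
    by (rule ev_nz_cont) (use poch_nz_all[OF l2] in \<open>auto intro!: continuous_intros\<close>)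
  have e2: "eventually (\<lambda>w. pochhammer (1/2 + of_nat k + a + w) N \<noteq> 0) (at b)"
    by (rule ev_nz_cont) (use poch_nz_all[OF l3] in \<open>auto intro!: continuous_intros\<close>)
  have e3: "eventually (\<lambda>w. pochhammer (1/2 + of_nat k + a - w) N \<noteq> 0) (at b)"
    by (rule ev_nz_cont) (use poch_nz_all[OF l4] in \<open>auto intro!: continuous_intros\<close>)
  have e4: "eventually (\<lambda>w. pochhammer (u3 k a w) k * pochhammer (v3 k a w) k \<noteq> 0) (at b)"
    by (rule ev_nz_cont) (use uv in \<open>auto intro!: continuous_intros simp: u3_def v3_def\<close>)
  have e5: "eventually (\<lambda>w. pochhammer (u3 k a w - of_nat N) (N div 2 + k) \<noteq> 0) (at b)"
  proof -
    have "eventually (\<lambda>w. pochhammer ((3/4 - of_nat k/2 - a/2 - of_nat N) + (1/2) * w) (N div 2 + k) \<noteq> 0) (at b)"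
      by (rule ev_poch_affine) simp
    moreover have eq: "\<And>w. (3/4 - of_nat k/2 - a/2 - of_nat N) + (1/2) * w = u3 k a w - of_nat N"
      by (simp add: u3_def field_simps)
    ultimately show ?thesis by (simp only: eq)
  qed
  have e6: "eventually (\<lambda>w. pochhammer (v3 k a w - of_nat N) (N div 2 + k) \<noteq> 0) (at b)"
  proof -
    have "eventually (\<lambda>w. pochhammer ((3/4 - of_nat k/2 - a/2 - of_nat N) + (-1/2) * w) (N div 2 + k) \<noteq> 0) (at b)"
      by (rule ev_poch_affine) simp
    moreover have eq: "\<And>w. (3/4 - of_nat k/2 - a/2 - of_nat N) + (-1/2) * w = v3 k a w - of_nat N"
      by (simp add: v3_def field_simps)
    ultimately show ?thesis by (simp only: eq)
  qed
  show "eventually (\<lambda>w. LF k a w N = coef3 k a w N) (at b)"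
    using e0 e1 e2 e3 e4 e5 e6
    by eventually_elim (rule FI_gen; assumption)
qed



lemma cpowr_add: "(w::complex) powr (p + q) = w powr p * w powr q"
  by (simp add: powr_def distrib_right exp_add)

lemma cpowr_neg_mult: "(w::complex) \<noteq> 0 \<Longrightarrow> w powr p * w powr (- p) = 1"
  by (simp add: powr_def exp_minus field_simps)

lemma norm_poch_le:
  fixes w :: complex and y :: real
  assumes "norm w \<le> y"
  shows "norm (pochhammer w j) \<le> pochhammer y j"
proof (induction j)
  case (Suc j)
  have y0: "0 \<le> y" using assms norm_ge_zero order_trans by blast
  have "norm (pochhammer w (Suc j)) = norm (pochhammer w j) * norm (w + of_nat j)"
    by (simp add: pochhammer_Suc norm_mult)
  also have "\<dots> \<le> pochhammer y j * (y + of_nat j)"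
  proof (rule mult_mono)
    show "norm (w + of_nat j) \<le> y + of_nat j"
      using norm_triangle_ineq[of w "of_nat j"] assms by simp
  qed (use Suc y0 in \<open>auto intro: order_trans[OF norm_ge_zero]\<close>)
  also have "\<dots> = pochhammer y (Suc j)" by (simp add: pochhammer_Suc)
  finally show ?case .
qed simp

lemma binom_real:
  fixes c t :: real
  assumes "0 \<le> t" "t < 1"
  shows "(\<lambda>j. pochhammer c j / fact j * t^j) sums (1 - t) powr (- c)"
proof -
  have "(\<lambda>j. ((- c) gchoose j) * (- t)^j) sums (1 + - t) powr (- c)"
    by (rule gen_binomial_real) (use assms in auto)
  moreover have "((- c) gchoose j) * (- t)^j = pochhammer c j / fact j * t^j" for j
  proof -
    have "((- c) gchoose j) * (- t)^j = ((-1)^j * (-1)^j) * (pochhammer c j / fact j * t^j)"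
      by (simp add: gbinomial_pochhammer power_minus[of t] field_simps)
    also have "(-1::real)^j * (-1)^j = 1" by (simp add: power_mult_distrib[symmetric])
    finally show ?thesis by simp
  qed
  ultimately show ?thesis by simp
qed

lemma binom_cplx:
  fixes c x :: complex
  assumes "norm x < 4"
  shows "(\<lambda>j. pochhammer c j / fact j * (x/4)^j) sums (1 - x/4) powr (- c)"
proof -
  have "norm (- x/4) < 1" using assms by (simp add: norm_divide)
  hence "(\<lambda>j. ((- c) gchoose j) * (- x/4)^j) sums (1 + - x/4) powr (- c)"
    by (rule gen_binomial_complex)
  moreover have "((- c) gchoose j) * (- x/4)^j = pochhammer c j / fact j * (x/4)^j" for j
  proof -
    have "((- c) gchoose j) * (- x/4)^j = ((-1)^j * (-1)^j) * (pochhammer c j / fact j * (x/4)^j)"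
      by (simp add: gbinomial_pochhammer power_minus[of "x/4"] field_simps)
    also have "(-1::complex)^j * (-1)^j = 1" by (simp add: power_mult_distrib[symmetric])
    finally show ?thesis by simp
  qed
  ultimately show ?thesis by simp
qed

lemma lower_lin:
  fixes \<beta> :: complex
  assumes "\<forall>m::nat. \<beta> \<noteq> - of_nat m"
  shows "\<exists>\<epsilon>>0. \<forall>m::nat. \<epsilon> * (of_nat m + 1) \<le> norm (\<beta> + of_nat m)"
proof -
  define M0 where "M0 = nat \<lceil>2 * norm \<beta>\<rceil> + 1"
  define e0 where "e0 = Min ((\<lambda>m. norm (\<beta> + of_nat m) / (of_nat m + 1)) ` {..<M0})"
  have pos: "norm (\<beta> + of_nat m) > 0" for m
  proof -
    have "\<beta> + of_nat m \<noteq> 0" using assms by (metis add.commute add_eq_0_iff)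
    thus ?thesis by simp
  qed
  have ne: "{..<M0} \<noteq> {}" unfolding M0_def by auto
  have e0pos: "e0 > 0" unfolding e0_def using ne pos by (subst Min_gr_iff) auto
  have e0le: "e0 \<le> norm (\<beta> + of_nat m) / (of_nat m + 1)" if "m < M0" for m
    unfolding e0_def using that by (intro Min_le) auto
  define e where "e = min (1/2) e0"
  have "e > 0" unfolding e_def using e0pos by simp
  moreover have "e * (of_nat m + 1) \<le> norm (\<beta> + of_nat m)" for m
  proof (cases "m < M0")
    case True
    have "e * (of_nat m + 1) \<le> e0 * (of_nat m + 1)" unfolding e_def by (intro mult_right_mono) auto
    also have "\<dots> \<le> norm (\<beta> + of_nat m)" using e0le[OF True] by (simp add: field_simps)
    finally show ?thesis .
  next
    case False
    hence m: "real m \<ge> 2 * norm \<beta> + 1" unfolding M0_def by linarith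
    have "e * (of_nat m + 1) \<le> (1/2) * (of_nat m + 1)" unfolding e_def by (intro mult_right_mono) auto
    also have "\<dots> \<le> real m - norm \<beta>" using m by simp
    also have "real m - norm \<beta> \<le> norm (\<beta> + of_nat m)"
      using norm_triangle_ineq2[of "of_nat m" "- \<beta>"] by (simp add: add.commute)
    finally show ?thesis .
  qed
  ultimately show ?thesis by blast
qed

definition hgc :: "complex \<Rightarrow> complex \<Rightarrow> complex \<Rightarrow> complex \<Rightarrow> complex \<Rightarrow> nat \<Rightarrow> complex" where
  "hgc a1 a2 a3 b1 b2 m = pochhammer a1 m * pochhammer a2 m * pochhammer a3 m
      / (pochhammer b1 m * pochhammer b2 m * fact m)"

lemma hgc_bound:
  assumes b1: "\<forall>m::nat. b1 \<noteq> - of_nat m" and b2: "\<forall>m::nat. b2 \<noteq> - of_nat m"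
  shows "\<exists>K>0. \<forall>m. norm (hgc a1 a2 a3 b1 b2 m) \<le> K^m"
proof -
  obtain e1 where e1: "e1 > 0" "\<And>m::nat. e1 * (of_nat m + 1) \<le> norm (b1 + of_nat m)" using lower_lin[OF b1] by blast
  obtain e2 where e2: "e2 > 0" "\<And>m::nat. e2 * (of_nat m + 1) \<le> norm (b2 + of_nat m)" using lower_lin[OF b2] by blast
  define P where "P = (norm a1 + 1) * (norm a2 + 1) * (norm a3 + 1)"
  define K where "K = P / (e1 * e2)"
  have P0: "P > 0" unfolding P_def by (intro mult_pos_pos) (auto simp: add_nonneg_pos)
  have K0: "K > 0" unfolding K_def using P0 e1 e2 by simp
  have up: "norm (a + of_nat m) \<le> (norm a + 1) * (of_nat m + 1)" for a :: complex and m :: nat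
  proof -
    have "norm (a + of_nat m) \<le> norm a + of_nat m" using norm_triangle_ineq[of a "of_nat m"] by simp
    also have "\<dots> \<le> (norm a + 1) * (of_nat m + 1)" by (simp add: algebra_simps)
    finally show ?thesis .
  qed
  have step: "norm (hgc a1 a2 a3 b1 b2 (Suc m)) \<le> norm (hgc a1 a2 a3 b1 b2 m) * K" for m
  proof -
    define num where "num = (a1 + of_nat m) * (a2 + of_nat m) * (a3 + of_nat m)"
    define den where "den = (b1 + of_nat m) * (b2 + of_nat m) * (of_nat m + 1 :: complex)"
    have rec: "hgc a1 a2 a3 b1 b2 (Suc m) = hgc a1 a2 a3 b1 b2 m * (num / den)"
      unfolding hgc_def num_def den_def by (simp add: pochhammer_Suc field_simps)
    have nn: "norm num \<le> P * (of_nat m + 1)^3"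
    proof -
      have "norm num = norm (a1 + of_nat m) * norm (a2 + of_nat m) * norm (a3 + of_nat m)"
        unfolding num_def by (simp add: norm_mult)
      also have "\<dots> \<le> ((norm a1 + 1) * (of_nat m + 1)) * ((norm a2 + 1) * (of_nat m + 1)) * ((norm a3 + 1) * (of_nat m + 1))"
        by (intro mult_mono up) auto
      also have "\<dots> = P * (of_nat m + 1)^3" unfolding P_def by (simp add: power3_eq_cube)
      finally show ?thesis .
    qed
    have nd: "e1 * e2 * (of_nat m + 1)^3 \<le> norm den"
    proof -
      have "e1 * e2 * (of_nat m + 1)^3 = (e1 * (of_nat m + 1)) * (e2 * (of_nat m + 1)) * (of_nat m + 1)"
        by (simp add: power3_eq_cube)
      also have "\<dots> \<le> norm (b1 + of_nat m) * norm (b2 + of_nat m) * (of_nat m + 1)"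
        using e1 e2 by (intro mult_mono) auto
      also have "\<dots> = norm den"
      proof -
        have h: "norm (of_nat m + (1::complex)) = of_nat m + 1"
          using norm_of_nat[of "Suc m", where 'a=complex] by (simp add: add.commute)
        show ?thesis unfolding den_def norm_mult h ..
      qed
      finally show ?thesis .
    qed
    have pos: "0 < e1 * e2 * (of_nat m + 1)^3" using e1 e2 by simp
    have "norm (num / den) = norm num / norm den" by (simp add: norm_divide)
    also have "\<dots> \<le> (P * (of_nat m + 1)^3) / (e1 * e2 * (of_nat m + 1)^3)"
      by (rule frac_le) (use nn nd pos P0 in auto)
    also have "\<dots> = K" unfolding K_def by simp
    finally have "norm (num / den) \<le> K" .
    thus ?thesis unfolding rec norm_mult by (intro mult_left_mono) auto
  qed
  have "norm (hgc a1 a2 a3 b1 b2 m) \<le> K^m" for m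
  proof (induction m)
    case 0 show ?case by (simp add: hgc_def)
  next
    case (Suc m)
    have "norm (hgc a1 a2 a3 b1 b2 (Suc m)) \<le> norm (hgc a1 a2 a3 b1 b2 m) * K" by (rule step)
    also have "\<dots> \<le> K^m * K" using Suc K0 by (intro mult_right_mono) auto
    finally show ?case by (simp add: mult.commute)
  qed
  thus ?thesis using K0 by blast
qed

lemma M1:
  fixes T :: "nat \<times> nat \<Rightarrow> complex" and G :: "nat \<Rightarrow> nat \<Rightarrow> real"
  assumes bd: "\<And>m j. norm (T (m, j)) \<le> G m j" and G0: "\<And>m j. 0 \<le> G m j"
    and Gs: "\<And>m. G m sums g m" and gs: "summable g"
  shows "T summable_on UNIV" and "\<And>m. summable (\<lambda>j. norm (T (m, j)))"
proof -
  have g0: "0 \<le> g m" for m by (rule sums_le[OF _ sums_zero Gs[of m]]) (rule G0)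
  have Gson: "G m summable_on UNIV" for m
    using summable_nonneg_imp_summable_on[OF sums_summable[OF Gs[of m]]] G0 by blast
  have Ghas: "(G m has_sum g m) UNIV" for m using sums_nonneg_imp_has_sum[OF Gs[of m]] G0 by blast
  show ns: "summable (\<lambda>j. norm (T (m, j)))" for m
    by (rule summable_comparison_test[OF _ sums_summable[OF Gs[of m]]]) (use bd in auto)
  have fib: "(\<lambda>j. norm (T (m, j))) summable_on UNIV" for m
    by (rule Infinite_Sum.abs_summable_on_comparison_test'[OF Gson]) (use bd in auto)
  have fibsum: "infsum (\<lambda>j. norm (T (m, j))) UNIV \<le> g m" for m
  proof -
    have "infsum (\<lambda>j. norm (T (m, j))) UNIV \<le> infsum (G m) UNIV"
      by (rule infsum_mono[OF fib Gson]) (use bd in auto)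
    also have "\<dots> = g m" using infsumI[OF Ghas] .
    finally show ?thesis .
  qed
  have gson: "g summable_on UNIV" using summable_nonneg_imp_summable_on[OF gs] g0 by blast
  have outer: "(\<lambda>m. norm (infsum (\<lambda>j. norm (T (m, j))) UNIV)) summable_on UNIV"
  proof (rule Infinite_Sum.abs_summable_on_comparison_test'[OF gson])
    fix m :: nat
    have "0 \<le> infsum (\<lambda>j. norm (T (m, j))) UNIV" by (rule infsum_nonneg) auto
    thus "norm (infsum (\<lambda>j. norm (T (m, j))) UNIV) \<le> g m" using fibsum[of m] by simp
  qed
  have "(\<lambda>p. norm (T p)) summable_on Sigma UNIV (\<lambda>_. UNIV)"
    using Infinite_Sum.abs_summable_on_Sigma_iff[where f=T and A=UNIV and B="\<lambda>_. UNIV"] fib outer by auto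
  thus "T summable_on UNIV" by (simp add: summable_on_iff_abs_summable_on_complex)
qed

lemma M2:
  fixes T :: "nat \<times> nat \<Rightarrow> complex"
  assumes Ts: "T summable_on UNIV"
    and ns: "\<And>m. summable (\<lambda>j. norm (T (m, j)))"
    and hs: "\<And>m. (\<lambda>j. T (m, j)) sums h m"
  shows "h sums (infsum T UNIV)"
    and "(\<lambda>N. \<Sum>m\<le>N div 2. T (m, N - 2*m)) sums (infsum T UNIV)"
proof -
  define S where "S = infsum T UNIV"
  have TS: "(T has_sum S) UNIV" unfolding S_def using Ts by simp
  have TS': "(T has_sum S) (Sigma UNIV (\<lambda>_. UNIV))" using TS by simp
  have "(h has_sum S) UNIV"
    by (rule has_sum_Sigma'[OF TS']) (use norm_summable_imp_has_sum[OF ns hs] in auto)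
  thus "h sums (infsum T UNIV)" unfolding S_def by (rule has_sum_imp_sums)
  define D where "D = Sigma (UNIV :: nat set) (\<lambda>N. {..N div 2})"
  have "(T has_sum S) UNIV = ((\<lambda>p. T (snd p, fst p - 2 * snd p)) has_sum S) D"
  proof (rule has_sum_reindex_bij_witness[where i = "\<lambda>p. (snd p, fst p - 2 * snd p)" and j = "\<lambda>(m::nat, j::nat). (2*m + j, m)"])
    show "\<And>a. a \<in> UNIV \<Longrightarrow> (snd ((\<lambda>(m::nat, j::nat). (2*m + j, m)) a), fst ((\<lambda>(m::nat, j::nat). (2*m + j, m)) a) - 2 * snd ((\<lambda>(m::nat, j::nat). (2*m + j, m)) a)) = a"
      by auto
    show "\<And>a. a \<in> UNIV \<Longrightarrow> (\<lambda>(m::nat, j::nat). (2*m + j, m)) a \<in> D" unfolding D_def by auto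
    show "\<And>b. b \<in> D \<Longrightarrow> (\<lambda>(m::nat, j::nat). (2*m + j, m)) (snd b, fst b - 2 * snd b) = b"
      unfolding D_def by auto
    show "\<And>b. b \<in> D \<Longrightarrow> (snd b, fst b - 2 * snd b) \<in> UNIV" by simp
    show "\<And>a. a \<in> UNIV \<Longrightarrow> T (snd ((\<lambda>(m::nat, j::nat). (2*m + j, m)) a), fst ((\<lambda>(m::nat, j::nat). (2*m + j, m)) a) - 2 * snd ((\<lambda>(m::nat, j::nat). (2*m + j, m)) a)) = T a"
      by auto
  qed simp
  with TS have TD: "((\<lambda>p. T (snd p, fst p - 2 * snd p)) has_sum S) D" by simp
  have "((\<lambda>N. \<Sum>m\<le>N div 2. T (m, N - 2*m)) has_sum S) UNIV"
    by (rule has_sum_Sigma'[OF TD[unfolded D_def]]) (auto intro: has_sum_finite)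
  thus "(\<lambda>N. \<Sum>m\<le>N div 2. T (m, N - 2*m)) sums (infsum T UNIV)" unfolding S_def by (rule has_sum_imp_sums)
qed

lemma poch_nonneg0: "0 \<le> (y::real) \<Longrightarrow> 0 \<le> pochhammer y n"
  by (simp add: pochhammer_prod prod_nonneg)

lemma cpowr_neg_nat: "(w::complex) \<noteq> 0 \<Longrightarrow> w powr (- of_nat n) = inverse (w ^ n)"
  using cpowr_neg_mult[of w "of_nat n"] by (simp add: powr_nat field_simps)

lemma main_analytic:
  fixes c :: "nat \<Rightarrow> complex" and a x :: complex and K :: real
  assumes cb: "\<And>m. norm (c m) \<le> K^m" and K0: "K > 0" and x1: "norm x \<le> 1" and Kx: "K * norm x < 1"
  shows "\<exists>S. (\<lambda>N. (\<Sum>m\<le>N div 2. c m * (27/64)^m * pochhammer (of_nat (3*m) + a) (N - 2*m)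
                / (fact (N - 2*m) * 4^(N - 2*m))) * x^N) sums S
           \<and> (\<lambda>m. c m * (27 * x^2 / (4 - x)^3)^m) sums ((1 - x/4) powr a * S)"
proof -
  define r where "r = norm x"
  define t where "t = r / 4"
  have r0: "0 \<le> r" unfolding r_def by simp
  have r1: "r \<le> 1" unfolding r_def using x1 .
  have t0: "0 \<le> t" and t1: "t \<le> 1/4" unfolding t_def using r0 r1 by auto
  have nx4: "norm x < 4" using x1 by simp
  define T where "T = (\<lambda>(m, j). c m * (27/64)^m * x^(2*m) * (pochhammer (of_nat (3*m) + a) j / fact j * (x/4)^j))"
  define G where "G = (\<lambda>m j. K^m * (27/64)^m * r^(2*m) * (pochhammer (real (3*m) + norm a) j / fact j * t^j))"
  define h where "h = (\<lambda>m. c m * (27/64)^m * x^(2*m) * (1 - x/4) powr (- (of_nat (3*m) + a)))"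
  define g where "g = (\<lambda>m. K^m * (27/64)^m * r^(2*m) * (1 - t) powr (- (real (3*m) + norm a)))"
  have hs: "(\<lambda>j. T (m, j)) sums h m" for m
    unfolding T_def h_def using sums_mult[OF binom_cplx[OF nx4, of "of_nat (3*m) + a"], of "c m * (27/64)^m * x^(2*m)"]
    by simp
  have Gs: "G m sums g m" for m
    unfolding G_def g_def using sums_mult[OF binom_real[OF t0, of "real (3*m) + norm a"], of "K^m * (27/64)^m * r^(2*m)"] t1
    by simp
  have G0: "0 \<le> G m j" for m j
    unfolding G_def using K0 r0 t0 by (intro mult_nonneg_nonneg poch_nonneg0 divide_nonneg_pos) auto
  have bd: "norm (T (m, j)) \<le> G m j" for m j
  proof -
    have p: "norm (pochhammer (of_nat (3*m) + a) j) \<le> pochhammer (real (3*m) + norm a) j"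
      by (rule norm_poch_le) (use norm_triangle_ineq[of "of_nat (3*m)" a] in simp)
    have "norm (T (m, j)) = norm (c m) * (27/64)^m * r^(2*m) * (norm (pochhammer (of_nat (3*m) + a) j) / fact j * t^j)"
      unfolding T_def r_def t_def by (simp add: norm_mult norm_divide norm_power)
    also have "\<dots> \<le> K^m * (27/64)^m * r^(2*m) * (pochhammer (real (3*m) + norm a) j / fact j * t^j)"
      by (intro mult_mono divide_right_mono p cb) (use r0 t0 K0 in \<open>auto intro!: mult_nonneg_nonneg poch_nonneg0 divide_nonneg_pos\<close>)
    finally show ?thesis unfolding G_def .
  qed
  define q where "q = K * (27/64) * r^2 / (1 - t)^3"
  have t1': "0 < 1 - t" using t1 by simp
  have geq: "g m = (1 - t) powr (- norm a) * q^m" for m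
  proof -
    have "(1 - t) powr (- (real (3*m) + norm a)) = (1 - t) powr (- real (3*m)) * (1 - t) powr (- norm a)"
      by (simp add: powr_add[symmetric])
    also have "(1 - t) powr (- real (3*m)) = inverse ((1 - t)^(3*m))"
      using t1' powr_realpow[of "1 - t" "3*m"] by (simp add: powr_minus)
    finally have e: "(1 - t) powr (- (real (3*m) + norm a)) = inverse ((1 - t)^(3*m)) * (1 - t) powr (- norm a)" .
    have pA: "(r^m)^2 = (r^2)^m" by (metis power_mult mult.commute)
    have pB: "((1 - t)^3)^m = ((1 - t)^m)^3" by (metis power_mult mult.commute)
    show ?thesis unfolding g_def q_def e using t1' pA pB
      by (simp add: power_mult power_mult_distrib power_divide field_simps)
  qed
  have q0: "0 \<le> q" unfolding q_def using K0 t1' by simp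
  have q1: "q < 1"
  proof -
    have "(3/4::real)^3 \<le> (1 - t)^3" using t1 by (intro power_mono) auto
    moreover have "(3/4::real)^3 = 27/64" by (simp add: power3_eq_cube)
    ultimately have c1: "27/64 \<le> (1 - t)^3" by simp
    have "q \<le> K * (27/64) * r^2 / (27/64)" unfolding q_def
      by (rule divide_left_mono[OF c1]) (use K0 t1 in auto)
    also have "\<dots> = K * r^2" by simp
    also have "\<dots> \<le> K * r" using r0 r1 K0 by (simp add: power2_eq_square mult_left_le)
    also have "\<dots> < 1" using Kx unfolding r_def .
    finally show ?thesis .
  qed
  have gs: "summable g"
    unfolding geq by (rule summable_mult) (rule summable_geometric, use q0 q1 in simp)
  note M = M1[OF bd G0 Gs gs]
  note R = M2[OF M(1) M(2) hs]
  define S where "S = infsum T UNIV"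
  have fiber: "(\<Sum>m\<le>N div 2. T (m, N - 2*m)) = (\<Sum>m\<le>N div 2. c m * (27/64)^m * pochhammer (of_nat (3*m) + a) (N - 2*m)
                / (fact (N - 2*m) * 4^(N - 2*m))) * x^N" for N
    unfolding sum_distrib_right
  proof (rule sum.cong)
    fix m assume "m \<in> {..N div 2}"
    hence mN: "2*m \<le> N" by auto
    have xx: "x^(2*m) * x^(N - 2*m) = x^N" using mN by (simp add: power_add[symmetric])
    show "T (m, N - 2*m) = c m * (27/64)^m * pochhammer (of_nat (3*m) + a) (N - 2*m)
                / (fact (N - 2*m) * 4^(N - 2*m)) * x^N"
      unfolding T_def xx[symmetric] by (simp add: power_divide field_simps)
  qed simp
  have s1: "(\<lambda>N. (\<Sum>m\<le>N div 2. c m * (27/64)^m * pochhammer (of_nat (3*m) + a) (N - 2*m)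
                / (fact (N - 2*m) * 4^(N - 2*m))) * x^N) sums S"
    using R(2) unfolding fiber S_def .
  have nz: "1 - x/4 \<noteq> 0" using nx4 by (auto simp: field_simps)
  have hz: "(1 - x/4) powr a * h m = c m * (27 * x^2 / (4 - x)^3)^m" for m
  proof -
    have "(1 - x/4) powr (- (of_nat (3*m) + a)) = (1 - x/4) powr (- of_nat (3*m)) * (1 - x/4) powr (- a)"
      using cpowr_add[of "1 - x/4" "- of_nat (3*m)" "- a"] by simp
    also have "(1 - x/4) powr (- of_nat (3*m)) = inverse ((1 - x/4)^(3*m))" by (rule cpowr_neg_nat[OF nz])
    finally have e: "(1 - x/4) powr (- (of_nat (3*m) + a)) = inverse ((1 - x/4)^(3*m)) * (1 - x/4) powr (- a)" .
    have e2: "(1 - x/4) powr a * (1 - x/4) powr (- a) = 1" by (rule cpowr_neg_mult[OF nz])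
    have e3: "(4 - x) = 4 * (1 - x/4)" by simp
    have "(1 - x/4) powr a * h m = c m * (27/64)^m * x^(2*m) * inverse ((1 - x/4)^(3*m)) * ((1 - x/4) powr a * (1 - x/4) powr (- a))"
      unfolding h_def e by (simp add: mult_ac)
    also have "\<dots> = c m * (27/64)^m * x^(2*m) * inverse ((1 - x/4)^(3*m))" unfolding e2 by simp
    also have "\<dots> = c m * (27 * x^2 / (4 - x)^3)^m"
    proof -
      have f1: "(4 - x)^3 = 64 * (1 - x/4)^3" by (simp add: power3_eq_cube field_simps)
      have f2: "27 * x^2 / (4 - x)^3 = (27/64) * x^2 * inverse ((1 - x/4)^3)"
        unfolding f1 using nz by (simp add: field_simps)
      have "(27 * x^2 / (4 - x)^3)^m = (27/64)^m * (x^2)^m * inverse (((1 - x/4)^3)^m)"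
        unfolding f2 by (simp only: power_mult_distrib power_inverse)
      also have "(x^2)^m = x^(2*m)" by (simp add: power_mult)
      also have "((1 - x/4)^3)^m = (1 - x/4)^(3*m)" by (simp add: power_mult)
      finally show ?thesis by simp
    qed
    finally show ?thesis .
  qed
  have s2: "(\<lambda>m. c m * (27 * x^2 / (4 - x)^3)^m) sums ((1 - x/4) powr a * S)"
    using sums_mult[OF R(1), of "(1 - x/4) powr a"] unfolding hz S_def .
  show ?thesis using s1 s2 by blast
qed



theorem theorem3:
  fixes k :: nat and a b :: complex
  assumes uv: "pochhammer (u3 k a b) k * pochhammer (v3 k a b) k \<noteq> 0"
    and l1: "\<forall>m::nat. 3/4 + of_nat k/2 + a/2 + b/2 \<noteq> - of_nat m"
    and l2: "\<forall>m::nat. 3/4 + of_nat k/2 + a/2 - b/2 \<noteq> - of_nat m"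
    and l3: "\<forall>m::nat. 1/2 + of_nat k + a + b \<noteq> - of_nat m"
    and l4: "\<forall>m::nat. 1/2 + of_nat k + a - b \<noteq> - of_nat m"
  shows "\<forall>\<^sub>F x in nhds 0.
           summable (\<lambda>n. coef3 k a b n * x ^ n) \<and>
           hyp3F2 (a/3) (1/3 + a/3) (2/3 + a/3)
                  (3/4 + of_nat k/2 + a/2 + b/2) (3/4 + of_nat k/2 + a/2 - b/2)
                  (27 * x^2 / (4 - x)^3)
           = (1 - x/4) powr a * (\<Sum>n. coef3 k a b n * x ^ n)"
proof -
  have ceq: "c3 k a b = hgc (a/3) (1/3 + a/3) (2/3 + a/3) (3/4 + of_nat k/2 + a/2 + b/2) (3/4 + of_nat k/2 + a/2 - b/2)"
    by (intro ext) (simp add: c3_def hgc_def)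
  obtain K where K0: "K > 0" and Kb: "\<And>m. norm (c3 k a b m) \<le> K^m"
    using hgc_bound[OF l1 l2, of "a/3" "1/3 + a/3" "2/3 + a/3"] unfolding ceq[symmetric] by blast
  define r0 where "r0 = min 1 (1 / (2*K))"
  have r0: "r0 > 0" unfolding r0_def using K0 by simp
  have ev: "eventually (\<lambda>x. x \<in> ball (0::complex) r0) (nhds 0)"
    by (rule eventually_nhds_in_open) (use r0 in auto)
  show ?thesis
  proof (rule eventually_mono[OF ev])
    fix x :: complex assume "x \<in> ball 0 r0"
    hence xr: "norm x < r0" by simp
    have x1: "norm x \<le> 1" using xr unfolding r0_def by simp
    have Kx: "K * norm x < 1"
    proof -
      have "norm x < 1 / (2*K)" using xr unfolding r0_def by simp
      hence "K * norm x < K * (1 / (2*K))" using K0 by (intro mult_strict_left_mono) auto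
      also have "\<dots> = 1/2" using K0 by simp
      finally show ?thesis by simp
    qed
    obtain S where s1: "(\<lambda>N. (\<Sum>m\<le>N div 2. c3 k a b m * (27/64)^m * pochhammer (of_nat (3*m) + a) (N - 2*m)
                / (fact (N - 2*m) * 4^(N - 2*m))) * x^N) sums S"
      and s2: "(\<lambda>m. c3 k a b m * (27 * x^2 / (4 - x)^3)^m) sums ((1 - x/4) powr a * S)"
      using main_analytic[OF Kb K0 x1 Kx, of a] by blast
    have s1': "(\<lambda>N. coef3 k a b N * x^N) sums S"
      using s1 unfolding LF_def[symmetric] FI_all[OF uv l1 l2 l3 l4] .
    have "hyp3F2 (a/3) (1/3 + a/3) (2/3 + a/3)
                  (3/4 + of_nat k/2 + a/2 + b/2) (3/4 + of_nat k/2 + a/2 - b/2)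
                  (27 * x^2 / (4 - x)^3) = (\<Sum>m. c3 k a b m * (27 * x^2 / (4 - x)^3)^m)"
      unfolding hyp3F2_def c3_def ..
    also have "\<dots> = (1 - x/4) powr a * S" using s2 by (rule sums_unique[symmetric])
    also have "S = (\<Sum>n. coef3 k a b n * x ^ n)" using s1' by (rule sums_unique)
    finally show "summable (\<lambda>n. coef3 k a b n * x ^ n) \<and> hyp3F2 (a/3) (1/3 + a/3) (2/3 + a/3)
                  (3/4 + of_nat k/2 + a/2 + b/2) (3/4 + of_nat k/2 + a/2 - b/2)
                  (27 * x^2 / (4 - x)^3)
           = (1 - x/4) powr a * (\<Sum>n. coef3 k a b n * x ^ n)"
      using sums_summable[OF s1'] by simp
  qed
qed


end
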